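(* Let $m=p^{a}q^{b}$ with $a,b$ positive integers and $p,q$ distinct primes, and let $n\ge4$. Then there exists an edge-labeling $\alpha$ of the complete graph $K_n$ by ideals of $\mathbb{Z}/m\mathbb{Z}$ such that $\operatorname{rk}[\mathbb{Z}/m\mathbb{Z}]_{(K_n,\alpha)}=1$.
   Context: An edge-labeling assigns to each edge of a graph a nonzero proper ideal of $\mathbb{Z}/m\mathbb{Z}$. A spline on an edge-labeled graph $(G,\alpha)$ with vertices $v_1,\dots,v_n$ is a vector $(f_{v_1},\dots,f_{v_n})\in(\mathbb{Z}/m\mathbb{Z})^n$ with $f_{v_i}-f_{v_j}\in\alpha(v_iv_j)$ for every edge; the splines form a $\mathbb{Z}$-module $[\mathbb{Z}/m\mathbb{Z}]_{(G,\alpha)}$, whose rank $\operatorname{rk}$ is the smallest size of a generating set. *)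

theory Defs
  imports "HOL-Number_Theory.Number_Theory" "HOL-Algebra.Algebra"
begin

text \<open>Z/mZ is modelled by the library ring residue_ring m (carrier {0..m-1}).
  Vertices of K_n are 0..n-1; a spline is a function nat => int that is a residue
  at each vertex i < n and 0 outside.\<close>

definition edge_labeling :: "int \<Rightarrow> nat \<Rightarrow> (nat \<Rightarrow> nat \<Rightarrow> int set) \<Rightarrow> bool" where
  "edge_labeling m n \<alpha> \<longleftrightarrow>
     (\<forall>i<n. \<forall>j<n. i \<noteq> j \<longrightarrow>
        \<alpha> i j = \<alpha> j i \<and> ideal (\<alpha> i j) (residue_ring m) \<and>
        \<alpha> i j \<noteq> {\<zero>\<^bsub>residue_ring m\<^esub>} \<and> \<alpha> i j \<noteq> carrier (residue_ring m))"

definition splines :: "int \<Rightarrow> nat \<Rightarrow> (nat \<Rightarrow> nat \<Rightarrow> int set) \<Rightarrow> (nat \<Rightarrow> int) set" where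
  "splines m n \<alpha> = {f. (\<forall>i<n. f i \<in> carrier (residue_ring m)) \<and> (\<forall>i\<ge>n. f i = 0) \<and>
      (\<forall>i<n. \<forall>j<n. i \<noteq> j \<longrightarrow> (f i - f j) mod m \<in> \<alpha> i j)}"

definition zspan :: "int \<Rightarrow> (nat \<Rightarrow> int) set \<Rightarrow> (nat \<Rightarrow> int) set" where
  "zspan m S = {(\<lambda>i. (\<Sum>s\<in>S. c s * s i) mod m) | c. True}"

definition spline_rank :: "int \<Rightarrow> nat \<Rightarrow> (nat \<Rightarrow> nat \<Rightarrow> int set) \<Rightarrow> nat" where
  "spline_rank m n \<alpha> = (LEAST k. \<exists>S. finite S \<and> card S = k \<and> S \<subseteq> splines m n \<alpha> \<and>
      zspan m S = splines m n \<alpha>)"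

end

theory Submission
  imports Defs
begin

lemma pidl_char:
  fixes m d e :: int
  assumes "m = d*e" "d > 1" "e > 1"
  shows "(PIdl\<^bsub>residue_ring m\<^esub> d) = {x. 0 \<le> x \<and> x < m \<and> d dvd x}"
proof (intro equalityI subsetI)
  fix x assume "x \<in> PIdl\<^bsub>residue_ring m\<^esub> d"
  then obtain y where y: "x = (y * d) mod m"
    unfolding cgenideal_def residue_ring_def by auto
  have "m > 0" using assms by (simp add: mult_pos_pos)
  moreover have "d dvd (y*d) mod m" using assms
    by (simp add: dvd_mod)
  ultimately show "x \<in> {x. 0 \<le> x \<and> x < m \<and> d dvd x}" using y by auto
next
  fix x assume "x \<in> {x. 0 \<le> x \<and> x < m \<and> d dvd x}"
  then obtain k where k: "x = d * k" "0 \<le> x" "x < m" by auto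
  have "0 \<le> k" using k assms by (simp add: zero_le_mult_iff)
  moreover have "k < e" using k assms by auto
  moreover have "e \<le> d*e" using assms by simp
  ultimately have "k < m" using assms(1) by linarith
  with \<open>0 \<le> k\<close> have "k \<in> {0..m-1}" by simp
  moreover have "x = (k * d) mod m" using k by (simp add: mult.commute)
  ultimately show "x \<in> PIdl\<^bsub>residue_ring m\<^esub> d"
    unfolding cgenideal_def residue_ring_def by auto
qed



lemma eq_of_dvd_range:
  fixes x y m :: int
  assumes "0 \<le> x" "x < m" "0 \<le> y" "y < m" "m dvd x - y"
  shows "x = y"
proof -
  have "x mod m = y mod m" using assms(5) by (simp add: mod_eq_dvd_iff)
  thus ?thesis using assms by simp
qed

definition selA :: "nat \<Rightarrow> nat \<Rightarrow> bool" where
  "selA i j \<longleftrightarrow> (min i j = 0 \<and> max i j \<ge> 2) \<or> (min i j = 1 \<and> max i j = 2)"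

theorem mainTheorem11:
  fixes p q :: int and a b n :: nat
  assumes "Factorial_Ring.prime p" and "Factorial_Ring.prime q" and "p \<noteq> q" and "a > 0" and "b > 0" and "n \<ge> 4"
  shows "\<exists>\<alpha>. edge_labeling (p ^ a * q ^ b) n \<alpha> \<and> spline_rank (p ^ a * q ^ b) n \<alpha> = 1"
proof -
  define P where "P = p ^ a"
  define Q where "Q = q ^ b"
  define m where "m = P * Q"
  have p1: "p > 1" using assms(1) by (simp add: prime_gt_1_int)
  have q1: "q > 1" using assms(2) by (simp add: prime_gt_1_int)
  have P1: "P > 1" unfolding P_def using p1 assms(4) by simp
  have Q1: "Q > 1" unfolding Q_def using q1 assms(5) by simp
  have cop: "coprime P Q" unfolding P_def Q_def
    using primes_coprime[OF assms(1,2,3)] by simp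
  have mPQ: "m = Q * P" unfolding m_def by simp
  have m1: "m > 1" unfolding m_def using P1 Q1
    by (metis less_1_mult)
  interpret R: residues m "residue_ring m" by unfold_locales (rule m1)
  define IP where "IP = PIdl\<^bsub>residue_ring m\<^esub> P"
  define IQ where "IQ = PIdl\<^bsub>residue_ring m\<^esub> Q"
  have IP: "IP = {x. 0 \<le> x \<and> x < m \<and> P dvd x}"
    unfolding IP_def using pidl_char[OF m_def P1 Q1] .
  have IQ: "IQ = {x. 0 \<le> x \<and> x < m \<and> Q dvd x}"
    unfolding IQ_def using pidl_char[OF mPQ Q1 P1] .
  have carr: "carrier (residue_ring m) = {0..m-1}" by (simp add: residue_ring_def)
  have zero: "\<zero>\<^bsub>residue_ring m\<^esub> = 0" by (simp add: residue_ring_def)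
  have Pm: "P < m" unfolding m_def using P1 Q1 by simp
  have Qm: "Q < m" unfolding m_def using P1 Q1 by simp
  define \<alpha> where "\<alpha> = (\<lambda>i j. if selA i j then IP else IQ)"
  have sym: "\<alpha> i j = \<alpha> j i" for i j
    unfolding \<alpha>_def selA_def by (simp add: min.commute max.commute)
  have idl: "ideal (\<alpha> i j) (residue_ring m)" for i j
  proof -
    have "ideal IP (residue_ring m)" unfolding IP_def
      by (rule R.cgenideal_ideal) (use P1 Pm carr in auto)
    moreover have "ideal IQ (residue_ring m)" unfolding IQ_def
      by (rule R.cgenideal_ideal) (use Q1 Qm carr in auto)
    ultimately show ?thesis unfolding \<alpha>_def by simp
  qed
  have nz: "\<alpha> i j \<noteq> {\<zero>\<^bsub>residue_ring m\<^esub>}" for i j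
  proof -
    have "P \<in> IP" using IP P1 Pm by auto
    moreover have "Q \<in> IQ" using IQ Q1 Qm by auto
    ultimately show ?thesis unfolding \<alpha>_def zero using P1 Q1 by auto
  qed
  have np: "\<alpha> i j \<noteq> carrier (residue_ring m)" for i j
  proof -
    have "1 \<in> carrier (residue_ring m)" using carr m1 by auto
    moreover have "1 \<notin> IP" using IP P1 by (auto simp: zdvd1_eq)
    moreover have "1 \<notin> IQ" using IQ Q1 by (auto simp: zdvd1_eq)
    ultimately show ?thesis unfolding \<alpha>_def by auto
  qed
  have EL: "edge_labeling m n \<alpha>"
    unfolding edge_labeling_def using sym idl nz np by blast
  have Pdm: "P dvd m" and Qdm: "Q dvd m" unfolding m_def by auto
  have memA: "(x mod m \<in> \<alpha> i j) \<longleftrightarrow> (if selA i j then P dvd x else Q dvd x)" for x i j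
    unfolding \<alpha>_def IP IQ using m1 Pdm Qdm by (auto simp: dvd_mod_iff)
  have const: "f i = f 0" if f: "f \<in> splines m n \<alpha>" and i: "i < n" for f i
  proof -
    have fc: "\<And>i. i < n \<Longrightarrow> 0 \<le> f i \<and> f i < m" using f carr unfolding splines_def by auto
    have e: "\<And>i j. i < n \<Longrightarrow> j < n \<Longrightarrow> i \<noteq> j \<Longrightarrow> (if selA i j then P dvd f i - f j else Q dvd f i - f j)"
      using f memA unfolding splines_def by blast
    have eP: "P dvd f i - f j" if "i < n" "j < n" "i \<noteq> j" "selA i j" for i j
      using e[OF that(1-3)] that(4) by simp
    have eQ: "Q dvd f i - f j" if "i < n" "j < n" "i \<noteq> j" "\<not> selA i j" for i j
      using e[OF that(1-3)] that(4) by simp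
    have dP: "P dvd f i - f 0"
    proof (cases "i = 0")
      case True then show ?thesis by simp
    next
      case False
      show ?thesis
      proof (cases "i = 1")
        case True
        have "P dvd f 1 - f 2" using eP[of 1 2] assms(6) by (simp add: selA_def)
        moreover have "P dvd f 2 - f 0" using eP[of 2 0] assms(6) by (simp add: selA_def)
        ultimately have "P dvd (f 1 - f 2) + (f 2 - f 0)" by (rule dvd_add)
        then show ?thesis using True by simp
      next
        case False
        then show ?thesis using eP[of i 0] \<open>i \<noteq> 0\<close> i assms(6) by (simp add: selA_def)
      qed
    qed
    have Q10: "Q dvd f 1 - f 0" using eQ[of 1 0] assms(6) by (simp add: selA_def)
    have dQ: "Q dvd f i - f 0"
    proof (cases "i = 0")
      case True then show ?thesis by simp
    next
      case False
      show ?thesis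
      proof (cases "i = 1")
        case True then show ?thesis using Q10 by simp
      next
        case False
        show ?thesis
        proof (cases "i = 2")
          case True
          have "Q dvd f 2 - f 3" using eQ[of 2 3] assms(6) by (simp add: selA_def)
          moreover have "Q dvd f 3 - f 1" using eQ[of 3 1] assms(6) by (simp add: selA_def)
          ultimately have "Q dvd (f 2 - f 3) + (f 3 - f 1) + (f 1 - f 0)" using Q10
            by (intro dvd_add)
          then show ?thesis using True by simp
        next
          case False
          have "Q dvd f i - f 1" using eQ[of i 1] \<open>i \<noteq> 0\<close> \<open>i \<noteq> 1\<close> False i assms(6)
            by (simp add: selA_def)
          then have "Q dvd (f i - f 1) + (f 1 - f 0)" using Q10 by (rule dvd_add)
          then show ?thesis by simp
        qed
      qed
    qed
    have "m dvd f i - f 0" unfolding m_def using dP dQ cop by (rule divides_mult)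
    then show ?thesis using fc[OF i] fc[of 0] i by (intro eq_of_dvd_range) auto
  qed
  define e where "e = (\<lambda>i::nat. if i < n then (1::int) else 0)"
  have zero_in: "(0::int) mod m \<in> \<alpha> i j" for i j using memA[of 0 i j] by simp
  have e_spl: "e \<in> splines m n \<alpha>"
    unfolding splines_def
  proof (intro CollectI conjI allI impI)
    fix i assume "i < n" then show "e i \<in> carrier (residue_ring m)"
      unfolding e_def using carr m1 by simp
  next
    fix i :: nat assume "n \<le> i" then show "e i = 0" unfolding e_def by simp
  next
    fix i j assume "i < n" "j < n" "i \<noteq> j"
    then have "e i - e j = 0" unfolding e_def by simp
    then show "(e i - e j) mod m \<in> \<alpha> i j" using zero_in[of i j] by simp
  qed
  have zs1: "zspan m {e} = {(\<lambda>i. (c e * e i) mod m) | c. True}"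
    unfolding zspan_def by simp
  have span: "zspan m {e} = splines m n \<alpha>"
  proof (intro equalityI subsetI)
    fix g assume "g \<in> zspan m {e}"
    then obtain c where g: "g = (\<lambda>i. (c e * e i) mod m)" unfolding zs1 by blast
    have gi: "g i = (if i < n then c e mod m else 0)" for i
      unfolding g e_def by simp
    show "g \<in> splines m n \<alpha>"
      unfolding splines_def
    proof (intro CollectI conjI allI impI)
      fix i assume "i < n" then show "g i \<in> carrier (residue_ring m)"
        using gi[of i] carr m1 by simp
    next
      fix i :: nat assume "n \<le> i" then show "g i = 0" using gi[of i] by simp
    next
      fix i j assume "i < n" "j < n" "i \<noteq> j"
      then have "g i - g j = 0" using gi[of i] gi[of j] by simp
      then show "(g i - g j) mod m \<in> \<alpha> i j" using zero_in[of i j] by simp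
    qed
  next
    fix f assume f: "f \<in> splines m n \<alpha>"
    have "\<forall>i<n. f i \<in> carrier (residue_ring m)" using f unfolding splines_def by blast
    then have "f 0 \<in> {0..m-1}" using carr assms(6) by simp
    then have f0: "0 \<le> f 0 \<and> f 0 < m" by simp
    have feq: "f = (\<lambda>i. ((\<lambda>_. f 0) e * e i) mod m)"
    proof
      fix i show "f i = ((\<lambda>_. f 0) e * e i) mod m"
      proof (cases "i < n")
        case True then show ?thesis using const[OF f True] f0 unfolding e_def by simp
      next
        case False then show ?thesis using f unfolding e_def splines_def by simp
      qed
    qed
    have "\<exists>c. f = (\<lambda>i. (c e * e i) mod m) \<and> True"
      by (rule exI[of _ "\<lambda>_. f 0"]) (rule conjI[OF feq TrueI])
    then show "f \<in> zspan m {e}" unfolding zs1 by (simp only: mem_Collect_eq)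
  qed
  have rank: "spline_rank m n \<alpha> = 1"
    unfolding spline_rank_def
  proof (rule Least_equality)
    show "\<exists>S. finite S \<and> card S = 1 \<and> S \<subseteq> splines m n \<alpha> \<and> zspan m S = splines m n \<alpha>"
      using span e_spl by (intro exI[of _ "{e}"]) auto
  next
    fix k assume "\<exists>S. finite S \<and> card S = k \<and> S \<subseteq> splines m n \<alpha> \<and> zspan m S = splines m n \<alpha>"
    then obtain S where S: "finite S" "card S = k" "zspan m S = splines m n \<alpha>" by blast
    show "1 \<le> k"
    proof (rule ccontr)
      assume "\<not> 1 \<le> k"
      then have "card S = 0" using S by simp
      then have "S = {}" using S(1) by simp
      then have "zspan m S = {\<lambda>i. 0}" unfolding zspan_def by auto
      then have "e = (\<lambda>i. 0)" using e_spl S by auto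
      then have "e 0 = 0" by simp
      then show False unfolding e_def using assms(6) by simp
    qed
  qed
  show ?thesis using EL rank unfolding m_def P_def Q_def by blast
qed

end
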